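(* Let $\gamma \in [0,1)$. Let $P$ be a valid p-value for a null hypothesis $H_0$, i.e. $P \in [0,1]$ and $\Pr(P \le s) \le s$ for all $s \in [0,1]$ under $H_0$, and let $Q$ be an arbitrary $[0,1]$-valued random variable, with any dependence structure between $P$ and $Q$. Let $T \in \{0,1\}$ be a random variable such that, conditionally on $(Q,P)$, $T \sim \mathrm{Bern}(1-\gamma Q)$ (i.e. $T$ is drawn based on $Q$ using additional independent randomness). Define the active p-value $$\tilde P := (1-T)\,Q + T\,(1-\gamma)^{-1} P.$$ Then $\tilde P$ is a valid p-value: under $H_0$, $\Pr(\tilde P \le s) \le s$ for all $s \in [0,1]$.
   Context: $Q$ is a "proxy" p-value on which no distributional assumption is made (it need not be superuniform under $H_0$). *)

theory Defs
  imports "HOL-Probability.Probability"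
begin

end

theory Submission
  imports Defs
begin

theorem proposition2:
  fixes M :: "'a measure" and P Q T :: "'a \<Rightarrow> real" and \<gamma> :: real
  assumes "prob_space M"
    and "0 \<le> \<gamma>" and "\<gamma> < 1"
    and "P \<in> borel_measurable M" and "\<forall>x\<in>space M. 0 \<le> P x \<and> P x \<le> 1"
    and "\<forall>s\<in>{0..1}. measure M {x\<in>space M. P x \<le> s} \<le> s"
    and "Q \<in> borel_measurable M" and "\<forall>x\<in>space M. 0 \<le> Q x \<and> Q x \<le> 1"
    and "T \<in> borel_measurable M" and "\<forall>x\<in>space M. T x = 0 \<or> T x = 1"
    and "\<forall>B\<in>sets (borel :: (real \<times> real) measure).
           measure M {x\<in>space M. T x = 1 \<and> (Q x, P x) \<in> B}
             = (\<integral>x. indicator B (Q x, P x) * (1 - \<gamma> * Q x) \<partial>M)"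
  shows "\<forall>s\<in>{0..1}.
           measure M {x\<in>space M. (1 - T x) * Q x + T x * (P x / (1 - \<gamma>)) \<le> s} \<le> s"
proof
  fix s :: real assume s: "s \<in> {0..1}"
  interpret prob_space M by fact
  note [measurable] = assms(4,7,9)
  have g1: "0 < 1 - \<gamma>" using assms by simp
  define A1 where "A1 = {x\<in>space M. T x = 0 \<and> Q x \<le> s}"
  define A2 where "A2 = {x\<in>space M. T x = 1 \<and> P x \<le> s * (1 - \<gamma>)}"
  define C1 where "C1 = {x\<in>space M. Q x \<le> s}"
  define D1 where "D1 = {x\<in>space M. T x = 1 \<and> Q x \<le> s}"
  have mA1[measurable]: "A1 \<in> sets M" unfolding A1_def by measurable
  have mA2[measurable]: "A2 \<in> sets M" unfolding A2_def by measurable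
  have mC1[measurable]: "C1 \<in> sets M" unfolding C1_def by measurable
  have mD1[measurable]: "D1 \<in> sets M" unfolding D1_def by measurable
  have B1: "{z::real\<times>real. fst z \<le> s} \<in> sets borel"
    by (intro borel_closed closed_Collect_le continuous_intros)
  have B2: "{z::real\<times>real. snd z \<le> s * (1 - \<gamma>)} \<in> sets borel"
    by (intro borel_closed closed_Collect_le continuous_intros)
  have sub: "{x\<in>space M. (1 - T x) * Q x + T x * (P x / (1 - \<gamma>)) \<le> s} \<subseteq> A1 \<union> A2"
  proof
    fix x assume x: "x \<in> {x\<in>space M. (1 - T x) * Q x + T x * (P x / (1 - \<gamma>)) \<le> s}"
    then have "T x = 0 \<or> T x = 1" using assms(10) by auto
    then show "x \<in> A1 \<union> A2"
    proof
      assume "T x = 0" then show ?thesis using x unfolding A1_def by auto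
    next
      assume "T x = 1" then have "P x / (1 - \<gamma>) \<le> s" using x by auto
      then have "P x \<le> s * (1 - \<gamma>)" using g1 by (simp add: divide_le_eq)
      then show ?thesis using x \<open>T x = 1\<close> unfolding A2_def by auto
    qed
  qed
  have int_ind: "integrable M f" if a: "\<And>x. x \<in> space M \<Longrightarrow> 0 \<le> f x \<and> f x \<le> 1" and b: "f \<in> borel_measurable M" for f :: "'a \<Rightarrow> real"
    by (rule integrable_const_bound[where B=1]) (use a b in auto)
  have D1eq: "measure M D1 = (\<integral>x. indicator C1 x * (1 - \<gamma> * Q x) \<partial>M)"
  proof -
    have "measure M D1 = (\<integral>x. indicator {z::real\<times>real. fst z \<le> s} (Q x, P x) * (1 - \<gamma> * Q x) \<partial>M)"
      using assms(11) B1 unfolding D1_def by auto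
    also have "\<dots> = (\<integral>x. indicator C1 x * (1 - \<gamma> * Q x) \<partial>M)"
      by (rule Bochner_Integration.integral_cong) (auto simp: C1_def indicator_def)
    finally show ?thesis .
  qed
  have A1eq: "measure M A1 = measure M C1 - measure M D1"
  proof -
    have "C1 = A1 \<union> D1" "A1 \<inter> D1 = {}" using assms(10) unfolding A1_def C1_def D1_def by auto
    then show ?thesis using finite_measure_Union[OF mA1 mD1] by simp
  qed
  have iC1: "integrable M (\<lambda>x. indicator C1 x * (1 - \<gamma> * Q x))"
    by (rule int_ind) (use assms s in \<open>auto simp: indicator_def mult_le_one\<close>)
  have iC1': "integrable M (\<lambda>x. indicator C1 x * (\<gamma> * Q x))"
    by (rule int_ind) (use assms s in \<open>auto simp: indicator_def mult_le_one\<close>)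
  have "measure M A1 = (\<integral>x. indicator C1 x \<partial>M) - (\<integral>x. indicator C1 x * (1 - \<gamma> * Q x) \<partial>M)"
    using A1eq D1eq by simp
  also have "\<dots> = (\<integral>x. indicator C1 x * (\<gamma> * Q x) \<partial>M)"
    proof -
    have iI: "integrable M (indicator C1 :: 'a \<Rightarrow> real)"
      by (rule int_ind) (auto simp: indicator_def)
    have "(\<integral>x. indicator C1 x \<partial>M) - (\<integral>x. indicator C1 x * (1 - \<gamma> * Q x) \<partial>M)
       = (\<integral>x. indicator C1 x - indicator C1 x * (1 - \<gamma> * Q x) \<partial>M)"
      by (rule Bochner_Integration.integral_diff[symmetric, OF iI iC1])
    also have "\<dots> = (\<integral>x. indicator C1 x * (\<gamma> * Q x) \<partial>M)"
      by (rule Bochner_Integration.integral_cong) (auto simp: algebra_simps)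
    finally show ?thesis .
  qed
  also have "\<dots> \<le> (\<integral>x. \<gamma> * s \<partial>M)"
    by (rule integral_mono) (use iC1' assms s in \<open>auto simp: indicator_def C1_def intro: mult_left_mono\<close>)
  also have "\<dots> = \<gamma> * s" by (simp add: prob_space)
  finally have m1: "measure M A1 \<le> \<gamma> * s" .
  define C2 where "C2 = {x\<in>space M. P x \<le> s * (1 - \<gamma>)}"
  have mC2[measurable]: "C2 \<in> sets M" unfolding C2_def by measurable
  have "measure M A2 = (\<integral>x. indicator {z::real\<times>real. snd z \<le> s * (1 - \<gamma>)} (Q x, P x) * (1 - \<gamma> * Q x) \<partial>M)"
    using assms(11) B2 unfolding A2_def by auto
  also have "\<dots> = (\<integral>x. indicator C2 x * (1 - \<gamma> * Q x) \<partial>M)"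
    by (rule Bochner_Integration.integral_cong) (auto simp: C2_def indicator_def)
  also have "\<dots> \<le> (\<integral>x. indicator C2 x \<partial>M)"
  proof (rule integral_mono)
    show "integrable M (\<lambda>x. indicator C2 x * (1 - \<gamma> * Q x))"
    proof (rule int_ind)
      fix x assume x: "x \<in> space M"
      have "\<gamma> * Q x \<le> 1" using assms(2,3,8) x by (metis mult_le_one less_imp_le)
      moreover have "0 \<le> \<gamma> * Q x" using assms(2,8) x by simp
      ultimately show "0 \<le> indicator C2 x * (1 - \<gamma> * Q x) \<and> indicator C2 x * (1 - \<gamma> * Q x) \<le> (1::real)"
        by (simp add: indicator_def)
    qed simp
    show "integrable M (indicator C2 :: 'a \<Rightarrow> real)"
      by (rule int_ind) (auto simp: indicator_def)
    fix x assume x: "x \<in> space M"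
    have "0 \<le> \<gamma> * Q x" using assms(2,8) x by simp
    then show "indicator C2 x * (1 - \<gamma> * Q x) \<le> (indicator C2 x :: real)"
      by (simp add: indicator_def)
  qed
  also have "\<dots> = measure M C2" by simp
  also have "\<dots> \<le> s * (1 - \<gamma>)"
  proof -
    have "0 \<le> s * (1 - \<gamma>)" using s g1 by simp
    moreover have "s * (1 - \<gamma>) \<le> 1" using s g1 assms(2) by (simp add: mult_le_one)
    ultimately show ?thesis using assms(6) unfolding C2_def by simp
  qed
  finally have m2: "measure M A2 \<le> s * (1 - \<gamma>)" .
  have "measure M {x\<in>space M. (1 - T x) * Q x + T x * (P x / (1 - \<gamma>)) \<le> s} \<le> measure M (A1 \<union> A2)"
    by (rule finite_measure_mono[OF sub]) simp
  also have "\<dots> \<le> measure M A1 + measure M A2" by (rule measure_Un_le) auto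
  also have "\<dots> \<le> s" using m1 m2 by (simp add: algebra_simps)
  finally show "measure M {x\<in>space M. (1 - T x) * Q x + T x * (P x / (1 - \<gamma>)) \<le> s} \<le> s" .
qed

end
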